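(* Let $t$ be transcendental over $\mathbb{Q}$, let $R=\mathbb{Z}[t^2,t^3]$, and let $S$ be the integral closure of $R$ in its field of fractions $\mathbb{Q}(t)$. Then $S=\mathbb{Z}[t]\neq R$, and every monic polynomial in $R[x]$ of degree at least $2$ that is decomposable over $S$ is decomposable over $R$.
   Context: For a ring $A$ and $f\in A[x]$ with $\deg f\ge 2$, $f$ is called decomposable over $A$ if $f(x)=g(h(x))$ for some $g,h\in A[x]$ of degree at least $2$, and indecomposable over $A$ otherwise. *)

theory Defs
  imports "HOL-Computational_Algebra.Polynomial"
begin

inductive_set subring_gen :: "'a::comm_ring_1 set \<Rightarrow> 'a set" for X where
  gen: "x \<in> X \<Longrightarrow> x \<in> subring_gen X"
| one: "1 \<in> subring_gen X"
| add: "a \<in> subring_gen X \<Longrightarrow> b \<in> subring_gen X \<Longrightarrow> a + b \<in> subring_gen X"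
| neg: "a \<in> subring_gen X \<Longrightarrow> - a \<in> subring_gen X"
| mult: "a \<in> subring_gen X \<Longrightarrow> b \<in> subring_gen X \<Longrightarrow> a * b \<in> subring_gen X"

definition frac_field :: "'a::field set \<Rightarrow> 'a set" where
  "frac_field A = {a / b | a b. a \<in> A \<and> b \<in> A \<and> b \<noteq> 0}"

definition poly_over :: "'a::zero set \<Rightarrow> 'a poly \<Rightarrow> bool" where
  "poly_over A p \<longleftrightarrow> (\<forall>i. coeff p i \<in> A)"

definition integral_closure :: "'a::comm_ring_1 set \<Rightarrow> 'a set \<Rightarrow> 'a set" where
  "integral_closure A K =
     {x \<in> K. \<exists>p. poly_over A p \<and> lead_coeff p = 1 \<and> poly p x = 0}"

definition decomposable_over :: "'a::comm_ring_1 set \<Rightarrow> 'a poly \<Rightarrow> bool" where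
  "decomposable_over A f \<longleftrightarrow>
     (\<exists>g h. poly_over A g \<and> poly_over A h \<and> degree g \<ge> 2 \<and> degree h \<ge> 2 \<and> f = pcompose g h)"

definition transcendental_over_Q :: "'a::field_char_0 \<Rightarrow> bool" where
  "transcendental_over_Q t \<longleftrightarrow> (\<forall>p :: rat poly. p \<noteq> 0 \<longrightarrow> poly (map_poly of_rat p) t \<noteq> 0)"

end

theory Submission imports Defs "HOL-Computational_Algebra.Polynomial_Factorial" begin

lemma map_poly_of_int_add: "map_poly of_int (p + q) = (map_poly of_int p + map_poly of_int q :: 'a::comm_ring_1 poly)"
  by (rule poly_eqI) (simp add: coeff_map_poly)
lemma map_poly_of_int_diff: "map_poly of_int (p - q) = (map_poly of_int p - map_poly of_int q :: 'a::comm_ring_1 poly)"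
  by (rule poly_eqI) (simp add: coeff_map_poly)
lemma map_poly_of_int_mult: "map_poly of_int (p * q) = (map_poly of_int p * map_poly of_int q :: 'a::comm_ring_1 poly)"
  by (rule poly_eqI) (simp add: coeff_map_poly coeff_mult)

locale trans =
  fixes t :: "'a::field_char_0"
  assumes tr: "transcendental_over_Q t"
begin

definition ev :: "int poly \<Rightarrow> 'a" where "ev p = poly (map_poly of_int p) t"

lemma ev_pCons: "ev (pCons a p) = of_int a + t * ev p" by (simp add: ev_def map_poly_pCons)
lemma ev_0[simp]: "ev 0 = 0" by (simp add: ev_def)
lemma ev_1[simp]: "ev 1 = 1" by (simp add: ev_def)
lemma ev_add[simp]: "ev (p + q) = ev p + ev q" by (simp add: ev_def map_poly_of_int_add)
lemma ev_diff[simp]: "ev (p - q) = ev p - ev q" by (simp add: ev_def map_poly_of_int_diff)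
lemma ev_mult[simp]: "ev (p * q) = ev p * ev q" by (simp add: ev_def map_poly_of_int_mult)
lemma ev_uminus[simp]: "ev (- p) = - ev p" using ev_diff[of 0 p] by simp
lemma ev_const[simp]: "ev [:a:] = of_int a" by (simp add: ev_def map_poly_pCons)
lemma ev_X: "ev [:0,1:] = t" by (simp add: ev_def map_poly_pCons)
lemma ev_pow[simp]: "ev (p ^ n) = ev p ^ n" by (induction n) auto

lemma ev_inj: assumes "ev p = ev q" shows "p = q"
proof (rule ccontr)
  assume ne: "p \<noteq> q"
  define r :: "rat poly" where "r = map_poly of_int (p - q)"
  have "r \<noteq> 0" using ne unfolding r_def by (subst map_poly_eq_0_iff) auto
  hence "poly (map_poly of_rat r) t \<noteq> 0" using tr unfolding transcendental_over_Q_def by blast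
  moreover have "map_poly of_rat r = (map_poly of_int (p - q) :: 'a poly)"
    unfolding r_def by (subst map_poly_map_poly) (auto simp: o_def)
  ultimately have "ev (p - q) \<noteq> 0" by (simp add: ev_def)
  with assms show False by simp
qed

lemma inj_ev: "inj ev" using ev_inj by (auto intro: injI)

lemma t_ne0: "t \<noteq> 0" using ev_inj[of "[:0,1:]" 0] ev_X by auto

lemma zero_in_gen: "0 \<in> subring_gen X"
  using subring_gen.add[OF subring_gen.one subring_gen.neg[OF subring_gen.one]] by simp

lemma of_int_in_gen: "of_int k \<in> subring_gen X"
proof -
  have n: "of_nat n \<in> subring_gen X" for n
    by (induction n) (auto intro: subring_gen.add subring_gen.one zero_in_gen)
  show ?thesis
  proof (cases "k \<ge> 0")
    case True then show ?thesis using n[of "nat k"] by simp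
  next
    case False then show ?thesis using subring_gen.neg[OF n[of "nat (-k)"]] by simp
  qed
qed


lemma coeff_mult_1: "coeff (p * q) 1 = coeff p 0 * coeff q 1 + coeff p 1 * coeff (q::'b::comm_semiring_0 poly) 0"
  by (simp add: coeff_mult numeral_2_eq_2 atMost_Suc add.commute)

lemma gen_t: "subring_gen {t} = range ev"
proof
  show "subring_gen {t} \<subseteq> range ev"
  proof
    fix x assume "x \<in> subring_gen {t}"
    then show "x \<in> range ev"
    proof (induction rule: subring_gen.induct)
      case (gen x) then have "x = ev [:0,1:]" using ev_X by simp
      then show ?case by (rule image_eqI) simp
    next
      case one then show ?case by (rule image_eqI[of _ _ 1]) simp_all
    next
      case (add a b)
      then obtain p q where "a = ev p" "b = ev q" by blast
      then have "a + b = ev (p + q)" by simp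
      then show ?case by (rule image_eqI) simp
    next
      case (neg a)
      then obtain p where "a = ev p" by blast
      then have "- a = ev (- p)" by simp
      then show ?case by (rule image_eqI) simp
    next
      case (mult a b)
      then obtain p q where "a = ev p" "b = ev q" by blast
      then have "a * b = ev (p * q)" by simp
      then show ?case by (rule image_eqI) simp
    qed
  qed
  show "range ev \<subseteq> subring_gen {t}"
  proof
    fix x assume "x \<in> range ev"
    then obtain p where x: "x = ev p" by auto
    have tt: "t \<in> subring_gen {t}" by (rule subring_gen.gen) simp
    have "ev p \<in> subring_gen {t}"
    proof (induction p)
      case 0 then show ?case by (simp add: zero_in_gen)
    next
      case (pCons a p)
      show ?case unfolding ev_pCons
        by (rule subring_gen.add[OF of_int_in_gen subring_gen.mult[OF tt pCons(2)]])
    qed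
    then show "x \<in> subring_gen {t}" using x by simp
  qed
qed

lemma R_sub: "subring_gen {t^2, t^3} \<subseteq> ev ` {p. coeff p 1 = 0}"
proof
  fix x assume "x \<in> subring_gen {t^2, t^3}"
  then show "x \<in> ev ` {p. coeff p 1 = 0}"
  proof (induction rule: subring_gen.induct)
    case (gen x)
    have "t^2 \<in> ev ` {p. coeff p 1 = 0}"
      apply (rule image_eqI[of _ _ "[:0,1:]^2"])
       apply (simp only: ev_pow ev_X)
      apply (simp add: numeral_2_eq_2 coeff_mult_1)
      done
    moreover have "t^3 \<in> ev ` {p. coeff p 1 = 0}"
      apply (rule image_eqI[of _ _ "[:0,1:]^3"])
       apply (simp only: ev_pow ev_X)
      apply (simp add: numeral_3_eq_3 coeff_mult_1)
      done
    ultimately show ?case using gen by auto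
  next
    case one then show ?case by (rule image_eqI[of _ _ 1]) simp_all
  next
    case (add a b)
    then obtain p q where "a = ev p" "b = ev q" "coeff p 1 = 0" "coeff q 1 = 0" by blast
    then show ?case by (intro image_eqI[of _ _ "p + q"]) simp_all
  next
    case (neg a)
    then obtain p where "a = ev p" "coeff p 1 = 0" by blast
    then show ?case by (intro image_eqI[of _ _ "- p"]) simp_all
  next
    case (mult a b)
    then obtain p q where "a = ev p" "b = ev q" "coeff p 1 = 0" "coeff q 1 = 0" by blast
    then show ?case by (intro image_eqI[of _ _ "p * q"]) (simp_all add: coeff_mult_1 coeff_mult_1[unfolded One_nat_def])
  qed
qed

lemma t23_mult: "t^2 * ev q \<in> subring_gen {t^2, t^3} \<and> t^3 * ev q \<in> subring_gen {t^2, t^3}"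
proof (induction q)
  case 0 then show ?case by (simp add: zero_in_gen)
next
  case (pCons a q)
  have g2: "t^2 \<in> subring_gen {t^2, t^3}" and g3: "t^3 \<in> subring_gen {t^2, t^3}"
    by (auto intro: subring_gen.gen)
  have e1: "t^2 * ev (pCons a q) = of_int a * t^2 + t^3 * ev q"
    by (simp add: ev_pCons algebra_simps power_numeral_reduce)
  have e2: "t^3 * ev (pCons a q) = of_int a * t^3 + t^2 * (t^2 * ev q)"
    by (simp add: ev_pCons algebra_simps power_numeral_reduce)
  have "of_int a * t^2 \<in> subring_gen {t^2, t^3}" "of_int a * t^3 \<in> subring_gen {t^2, t^3}"
    using subring_gen.mult[OF of_int_in_gen g2] subring_gen.mult[OF of_int_in_gen g3] by auto
  moreover have "t^2 * (t^2 * ev q) \<in> subring_gen {t^2, t^3}"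
    using subring_gen.mult[OF g2, of "t^2 * ev q"] pCons by blast
  ultimately show ?case unfolding e1 e2 using pCons subring_gen.add by blast
qed

lemma R_eq: "subring_gen {t^2, t^3} = ev ` {p. coeff p 1 = 0}"
proof
  show "ev ` {p. coeff p 1 = 0} \<subseteq> subring_gen {t^2, t^3}"
  proof
    fix x assume "x \<in> ev ` {p. coeff p 1 = 0}"
    then obtain p where x: "x = ev p" and c: "coeff p 1 = 0" by auto
    obtain a p1 where p: "p = pCons a p1" by (cases p) auto
    obtain b q where p1: "p1 = pCons b q" by (cases p1) auto
    have "b = 0" using c p p1 by simp
    hence "x = of_int a + t^2 * ev q" using x p p1 by (simp add: ev_pCons power2_eq_square)
    then show "x \<in> subring_gen {t^2, t^3}" using t23_mult[of q] subring_gen.add[OF of_int_in_gen]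
      by blast
  qed
qed (rule R_sub)

lemma ev_sum: "ev (sum f I) = (\<Sum>i\<in>I. ev (f i))"
  by (induction I rule: infinite_finite_induct) auto

lemma S_sub_Zt:
  assumes xf: "x \<in> frac_field (subring_gen {t^2, t^3})"
    and P: "poly_over (subring_gen {t^2, t^3}) P" "lead_coeff P = 1" "poly P x = 0"
  shows "x \<in> range ev"
proof -
  from xf obtain a b where ab: "x = a / b" "a \<in> subring_gen {t^2, t^3}" "b \<in> subring_gen {t^2, t^3}" "b \<noteq> 0"
    unfolding frac_field_def by auto
  then obtain a1 b1 where a1: "a = ev a1" and b1: "b = ev b1" using R_eq by auto
  have "b1 \<noteq> 0" using ab b1 by auto
  define g where "g = gcd a1 b1"
  have g0: "g \<noteq> 0" using \<open>b1 \<noteq> 0\<close> g_def by auto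
  obtain a2 b2 where a2: "a1 = a2 * g" and b2: "b1 = b2 * g" and cop: "coprime a2 b2"
    using gcd_coprime_exists[OF g0[unfolded g_def]] unfolding g_def[symmetric] by blast
  have evg: "ev g \<noteq> 0" using g0 ev_inj[of g 0] ev_0 by metis
  define A where "A = ev a2"
  define B where "B = ev b2"
  have B0: "B \<noteq> 0" using ab(4) b1 b2 B_def by (metis ev_mult mult_zero_left)
  have x: "x = A / B" using ab a1 b1 a2 b2 evg A_def B_def by simp
  define n where "n = degree P"
  define q where "q i = inv ev (coeff P i)" for i
  have cq: "coeff P i = ev (q i)" for i
  proof -
    have "coeff P i \<in> ev ` {p. coeff p 1 = 0}" using P(1) R_sub unfolding poly_over_def by blast
    hence "coeff P i \<in> range ev" by blast
    then show ?thesis by (simp add: q_def f_inv_into_f)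
  qed
  have qn: "q n = 1" using P(2) cq[of n] ev_inj[of "q n" 1] n_def by simp
  have xi: "x^i * B^n = A^i * B^(n-i)" if "i \<le> n" for i
  proof -
    have "B^n = B^i * B^(n-i)" using that by (simp add: power_add[symmetric])
    moreover have "x^i * B^i = A^i" using x B0 by (simp add: power_mult_distrib[symmetric])
    ultimately show ?thesis by (simp add: mult.assoc[symmetric])
  qed
  have "0 = poly P x * B^n" using P(3) by simp
  also have "\<dots> = (\<Sum>i\<le>n. coeff P i * (x^i * B^n))"
    unfolding poly_altdef n_def by (simp add: sum_distrib_right mult.assoc)
  also have "\<dots> = (\<Sum>i\<le>n. ev (q i * a2^i * b2^(n-i)))"
    by (rule sum.cong) (simp_all add: xi cq A_def[symmetric] B_def[symmetric] mult.assoc)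
  also have "\<dots> = ev (\<Sum>i\<le>n. q i * a2^i * b2^(n-i))" by (simp add: ev_sum)
  finally have "(\<Sum>i\<le>n. q i * a2^i * b2^(n-i)) = 0" using ev_inj[of _ 0] by simp
  hence "a2^n + (\<Sum>i<n. q i * a2^i * b2^(n-i)) = 0"
    by (simp add: lessThan_Suc_atMost[symmetric] sum.lessThan_Suc qn add.commute)
  hence e: "a2^n = - (\<Sum>i<n. q i * a2^i * b2^(n-i))"
    by (simp add: eq_neg_iff_add_eq_0)
  have "b2 dvd (\<Sum>i<n. q i * a2^i * b2^(n-i))"
    by (rule dvd_sum) (simp add: dvd_mult dvd_power)
  hence d: "b2 dvd a2^n" unfolding e by simp
  have cp: "coprime b2 (a2^n)" using cop by (simp add: coprime_commute)
  have "is_unit b2" using coprime_common_divisor[OF cp dvd_refl d] .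
  then obtain c where c: "1 = b2 * c" by (auto elim: dvdE)
  have Bc: "B * ev c = 1" using c B_def by (metis ev_1 ev_mult)
  have "x = x * (B * ev c)" using Bc by simp
  also have "\<dots> = A * ev c" using x B0 by simp
  finally have "x = ev (a2 * c)" using A_def by simp
  then show ?thesis by (metis rangeI)
qed

lemma zero_R: "0 \<in> A \<Longrightarrow> poly_over A 0" by (simp add: poly_over_def)
lemma poly_over_pCons: "poly_over A (pCons a p) \<longleftrightarrow> a \<in> A \<and> poly_over A p"
  unfolding poly_over_def by (auto simp: coeff_pCons split: nat.splits)

lemma Zt_sub_S:
  "ev p \<in> integral_closure (subring_gen {t^2, t^3}) (frac_field (subring_gen {t^2, t^3}))"
proof -
  let ?R = "subring_gen {t^2, t^3}"
  have g2: "t^2 \<in> ?R" by (auto intro: subring_gen.gen)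
  have t2: "t^2 \<noteq> 0" using t_ne0 by simp
  have "ev p = (t^2 * ev p) / t^2" using t2 by simp
  hence ff: "ev p \<in> frac_field ?R" unfolding frac_field_def using t23_mult[of p] g2 t2 by blast
  obtain c q where p: "p = pCons c q" by (cases p) auto
  define y where "y = t * ev q"
  have x: "ev p = of_int c + y" using p y_def by (simp add: ev_pCons)
  have y2: "y^2 \<in> ?R" using t23_mult[of "q^2"] y_def by (simp add: power_mult_distrib)
  define P where "P = [:of_int c ^ 2 - y^2, - 2 * of_int c, 1:]"
  have c0: "of_int c ^ 2 - y^2 \<in> ?R"
    using subring_gen.add[OF of_int_in_gen[of "c^2"] subring_gen.neg[OF y2]] by simp
  have c1: "- 2 * of_int c \<in> ?R" using of_int_in_gen[of "-2*c"] by simp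
  have "poly_over ?R P" unfolding P_def
    using c0 c1 by (simp add: poly_over_pCons zero_R zero_in_gen subring_gen.one)
  moreover have "lead_coeff P = 1" by (simp add: P_def)
  moreover have "poly P (ev p) = 0" unfolding P_def x by (simp add: algebra_simps power2_eq_square)
  ultimately show ?thesis using ff unfolding integral_closure_def by blast
qed

lemma S_eq: "integral_closure (subring_gen {t^2, t^3}) (frac_field (subring_gen {t^2, t^3})) = range ev"
proof (rule set_eqI, rule iffI)
  fix x assume "x \<in> integral_closure (subring_gen {t^2, t^3}) (frac_field (subring_gen {t^2, t^3}))"
  then obtain P where "x \<in> frac_field (subring_gen {t^2, t^3})" "poly_over (subring_gen {t^2, t^3}) P"
    "lead_coeff P = 1" "poly P x = 0" unfolding integral_closure_def by blast
  then show "x \<in> range ev" by (rule S_sub_Zt)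
next
  fix x assume "x \<in> range ev"
  then obtain p where "x = ev p" by blast
  then show "x \<in> integral_closure (subring_gen {t^2, t^3}) (frac_field (subring_gen {t^2, t^3}))"
    using Zt_sub_S by simp
qed

lemma t_notin_R: "t \<notin> subring_gen {t^2, t^3}"
proof
  assume "t \<in> subring_gen {t^2, t^3}"
  then obtain p where "t = ev p" "coeff p 1 = 0" using R_eq by auto
  hence "p = [:0,1:]" using ev_inj[of p "[:0,1:]"] ev_X by simp
  with \<open>coeff p 1 = 0\<close> show False by simp
qed

definition ph0 :: "'a \<Rightarrow> int" where "ph0 x = coeff (inv ev x) 0"
definition ph1 :: "'a \<Rightarrow> int" where "ph1 x = coeff (inv ev x) 1"

lemma ph0_ev[simp]: "ph0 (ev p) = coeff p 0" by (simp add: ph0_def inv_f_f[OF inj_ev])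
lemma ph1_ev[simp]: "ph1 (ev p) = coeff p 1" by (simp add: ph1_def inv_f_f[OF inj_ev])
lemma ph0_0[simp]: "ph0 0 = 0" using ph0_ev[of 0] by simp
lemma ph1_0[simp]: "ph1 0 = 0" using ph1_ev[of 0] by simp

lemma ph_add: assumes "x \<in> range ev" "y \<in> range ev"
  shows "ph0 (x + y) = ph0 x + ph0 y" "ph1 (x + y) = ph1 x + ph1 y"
proof -
  obtain p q where "x = ev p" "y = ev q" using assms by blast
  then show "ph0 (x + y) = ph0 x + ph0 y" "ph1 (x + y) = ph1 x + ph1 y"
    using ph0_ev[of "p+q"] ph1_ev[of "p+q"] by simp_all
qed

lemma ph_mult: assumes "x \<in> range ev" "y \<in> range ev"
  shows "ph0 (x * y) = ph0 x * ph0 y" "ph1 (x * y) = ph0 x * ph1 y + ph1 x * ph0 y"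
proof -
  obtain p q where "x = ev p" "y = ev q" using assms by blast
  then show "ph0 (x * y) = ph0 x * ph0 y" "ph1 (x * y) = ph0 x * ph1 y + ph1 x * ph0 y"
    using ph0_ev[of "p*q"] ph1_ev[of "p*q"] by (simp_all add: coeff_mult_0 coeff_mult_1[unfolded One_nat_def])
qed

lemma Z_add: assumes "x \<in> range ev" "y \<in> range ev" shows "x + y \<in> range ev"
proof -
  obtain p q where "x = ev p" "y = ev q" using assms by blast
  then have "x + y = ev (p+q)" by simp
  then show ?thesis by (rule image_eqI) simp
qed
lemma Z_mult: assumes "x \<in> range ev" "y \<in> range ev" shows "x * y \<in> range ev"
proof -
  obtain p q where "x = ev p" "y = ev q" using assms by blast
  then have "x * y = ev (p*q)" by simp
  then show ?thesis by (rule image_eqI) simp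
qed
lemma Z_uminus: assumes "x \<in> range ev" shows "- x \<in> range ev"
proof -
  obtain p where "x = ev p" using assms by blast
  then have "- x = ev (- p)" by simp
  then show ?thesis by (rule image_eqI) simp
qed
lemma Z_0: "0 \<in> range ev" by (metis ev_0 rangeI)
lemma Z_1: "1 \<in> range ev" by (metis ev_1 rangeI)

abbreviation "PZ \<equiv> poly_over (range ev)"

lemma PZ_add: "PZ G \<Longrightarrow> PZ H \<Longrightarrow> PZ (G + H)"
  unfolding poly_over_def by (simp add: Z_add)
lemma PZ_uminus: "PZ G \<Longrightarrow> PZ (- G)"
  unfolding poly_over_def by (simp add: Z_uminus)
lemma PZ_smult: "a \<in> range ev \<Longrightarrow> PZ H \<Longrightarrow> PZ (smult a H)"
  unfolding poly_over_def by (simp add: Z_mult)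
lemma PZ_0: "PZ 0" by (simp add: poly_over_def Z_0)
lemma PZ_pCons: "PZ (pCons a G) \<longleftrightarrow> a \<in> range ev \<and> PZ G"
  by (rule poly_over_pCons)
lemma PZ_mult: "PZ G \<Longrightarrow> PZ H \<Longrightarrow> PZ (G * H)"
proof (induction G)
  case 0 then show ?case by (simp add: PZ_0)
next
  case (pCons a G)
  then show ?case by (simp add: PZ_pCons PZ_add PZ_smult PZ_0 Z_0)
qed
lemma PZ_const: "a \<in> range ev \<Longrightarrow> PZ [:a:]"
  by (simp add: PZ_pCons PZ_0)
lemma PZ_pcompose: "PZ G \<Longrightarrow> PZ H \<Longrightarrow> PZ (pcompose G H)"
proof (induction G)
  case 0 then show ?case by (simp add: PZ_0)
next
  case (pCons a G)
  then have "a \<in> range ev" "PZ G" "PZ (pcompose G H)" by (simp_all add: PZ_pCons)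
  then show ?case unfolding pcompose_pCons using pCons.prems(2)
    by (intro PZ_add PZ_const PZ_mult)
qed
lemma PZ_coeff: "PZ G \<Longrightarrow> coeff G i \<in> range ev" by (simp add: poly_over_def)

definition E :: "'a poly \<Rightarrow> 'a poly" where "E G = map_poly (\<lambda>x. of_int (ph0 x)) G"
definition D :: "'a poly \<Rightarrow> 'a poly" where "D G = map_poly (\<lambda>x. of_int (ph1 x)) G"

lemma coeff_E: "coeff (E G) i = of_int (ph0 (coeff G i))" by (simp add: E_def coeff_map_poly)
lemma coeff_D: "coeff (D G) i = of_int (ph1 (coeff G i))" by (simp add: D_def coeff_map_poly)

lemma E_0[simp]: "E 0 = 0" by (simp add: E_def)
lemma D_0[simp]: "D 0 = 0" by (simp add: D_def)
lemma E_pCons: "E (pCons a G) = pCons (of_int (ph0 a)) (E G)" by (simp add: E_def map_poly_pCons)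
lemma D_pCons: "D (pCons a G) = pCons (of_int (ph1 a)) (D G)" by (simp add: D_def map_poly_pCons)

lemma E_add: "PZ G \<Longrightarrow> PZ H \<Longrightarrow> E (G + H) = E G + E H"
  by (rule poly_eqI) (simp add: coeff_E ph_add PZ_coeff)
lemma D_add: "PZ G \<Longrightarrow> PZ H \<Longrightarrow> D (G + H) = D G + D H"
  by (rule poly_eqI) (simp add: coeff_D ph_add PZ_coeff)
lemma E_smult: "a \<in> range ev \<Longrightarrow> PZ H \<Longrightarrow> E (smult a H) = smult (of_int (ph0 a)) (E H)"
  by (rule poly_eqI) (simp add: coeff_E ph_mult PZ_coeff)
lemma D_smult: "a \<in> range ev \<Longrightarrow> PZ H \<Longrightarrow>
    D (smult a H) = smult (of_int (ph0 a)) (D H) + smult (of_int (ph1 a)) (E H)"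
  by (rule poly_eqI) (simp add: coeff_E coeff_D ph_mult PZ_coeff algebra_simps)

lemma E_mult: "PZ G \<Longrightarrow> PZ H \<Longrightarrow> E (G * H) = E G * E H"
proof (induction G)
  case 0 then show ?case by simp
next
  case (pCons a G)
  have a: "a \<in> range ev" and G: "PZ G" using pCons.prems by (simp_all add: PZ_pCons)
  have "E (pCons a G * H) = E (smult a H + pCons 0 (G * H))" by simp
  also have "\<dots> = E (smult a H) + E (pCons 0 (G * H))"
    using a G pCons.prems by (intro E_add) (simp_all add: PZ_smult PZ_pCons PZ_mult Z_0)
  also have "\<dots> = smult (of_int (ph0 a)) (E H) + pCons 0 (E G * E H)"
    using a G pCons by (simp add: E_smult E_pCons)
  also have "\<dots> = E (pCons a G) * E H" by (simp add: E_pCons)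
  finally show ?case .
qed

lemma D_mult: "PZ G \<Longrightarrow> PZ H \<Longrightarrow> D (G * H) = E G * D H + D G * E H"
proof (induction G)
  case 0 then show ?case by simp
next
  case (pCons a G)
  have a: "a \<in> range ev" and G: "PZ G" using pCons.prems by (simp_all add: PZ_pCons)
  have "D (pCons a G * H) = D (smult a H + pCons 0 (G * H))" by simp
  also have "\<dots> = D (smult a H) + D (pCons 0 (G * H))"
    using a G pCons.prems by (intro D_add) (simp_all add: PZ_smult PZ_pCons PZ_mult Z_0)
  also have "\<dots> = smult (of_int (ph0 a)) (D H) + smult (of_int (ph1 a)) (E H)
       + pCons 0 (E G * D H + D G * E H)"
    using a G pCons by (simp add: D_smult D_pCons)
  also have "\<dots> = E (pCons a G) * D H + D (pCons a G) * E H"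
    by (simp add: E_pCons D_pCons algebra_simps)
  finally show ?case .
qed

lemma E_const: "E [:a:] = [:of_int (ph0 a):]" by (simp add: E_pCons)
lemma D_const: "D [:a:] = [:of_int (ph1 a):]" by (simp add: D_pCons)

lemma E_pcompose: "PZ G \<Longrightarrow> PZ H \<Longrightarrow> E (pcompose G H) = pcompose (E G) (E H)"
proof (induction G)
  case 0 then show ?case by simp
next
  case (pCons a G)
  have a: "a \<in> range ev" and G: "PZ G" using pCons.prems by (simp_all add: PZ_pCons)
  have "E (pcompose (pCons a G) H) = E ([:a:] + H * pcompose G H)" by (simp add: pcompose_pCons)
  also have "\<dots> = [:of_int (ph0 a):] + E H * pcompose (E G) (E H)"
    using a G pCons by (simp add: E_add E_mult E_const PZ_const PZ_mult PZ_pcompose)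
  also have "\<dots> = pcompose (E (pCons a G)) (E H)" by (simp add: E_pCons pcompose_pCons)
  finally show ?case .
qed

lemma D_pcompose: "PZ G \<Longrightarrow> PZ H \<Longrightarrow>
   D (pcompose G H) = pcompose (D G) (E H) + pcompose (pderiv (E G)) (E H) * D H"
proof (induction G)
  case 0 then show ?case by simp
next
  case (pCons a G)
  have a: "a \<in> range ev" and G: "PZ G" using pCons.prems by (simp_all add: PZ_pCons)
  have "D (pcompose (pCons a G) H) = D ([:a:] + H * pcompose G H)" by (simp add: pcompose_pCons)
  also have "\<dots> = [:of_int (ph1 a):] + (E H * (pcompose (D G) (E H) + pcompose (pderiv (E G)) (E H) * D H)
       + D H * pcompose (E G) (E H))"
    using a G pCons by (simp add: D_add D_mult E_pcompose D_const PZ_const PZ_mult PZ_pcompose)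
  also have "\<dots> = pcompose (D (pCons a G)) (E H) + pcompose (pderiv (E (pCons a G))) (E H) * D H"
    by (simp add: E_pCons D_pCons pcompose_pCons pderiv_pCons pcompose_add algebra_simps)
  finally show ?case .
qed

lemma R_ph1: "x \<in> subring_gen {t^2, t^3} \<Longrightarrow> x \<in> range ev \<and> ph1 x = 0"
  using R_eq by auto
lemma ph1_R: assumes "x \<in> range ev" "ph1 x = 0" shows "x \<in> subring_gen {t^2, t^3}"
proof -
  obtain p where "x = ev p" using assms by blast
  with assms have "x \<in> ev ` {p. coeff p 1 = 0}" by auto
  then show ?thesis using R_eq by simp
qed

lemma degree_E: assumes "ph0 (lead_coeff G) \<noteq> 0" shows "degree (E G) = degree G"
proof (rule antisym)
  show "degree (E G) \<le> degree G" by (rule degree_le) (simp add: coeff_E coeff_eq_0)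
  show "degree G \<le> degree (E G)" by (rule le_degree) (simp add: coeff_E assms)
qed

lemma arith_contra:
  assumes "(k::nat) * s = (d - 1) * s + e" "0 < e" "e < s" "1 \<le> d"
  shows False
proof (cases "k \<le> d - 1")
  case True
  hence "k * s \<le> (d - 1) * s" by (rule mult_le_mono1)
  then show False using assms by linarith
next
  case False
  hence "d \<le> k" by arith
  hence "d * s \<le> k * s" by (rule mult_le_mono1)
  moreover obtain d' where "d = Suc d'" using assms(4) by (cases d) auto
  ultimately show False using assms by simp
qed

lemma key:
  assumes g: "PZ g" and h: "PZ h" and f: "poly_over (subring_gen {t^2, t^3}) f"
    and fgh: "f = pcompose g h" and dg: "degree g \<ge> 2" and dh: "degree h \<ge> 2"
    and h0: "coeff h 0 = 0" and lg: "ph0 (lead_coeff g) \<noteq> 0" and lh: "ph0 (lead_coeff h) \<noteq> 0"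
    and lh1: "ph1 (lead_coeff h) = 0"
  shows "poly_over (subring_gen {t^2, t^3}) g \<and> poly_over (subring_gen {t^2, t^3}) h"
proof -
  define s where "s = degree h"
  define d where "d = degree g"
  have Df: "D f = 0"
  proof (rule poly_eqI)
    fix i
    have "coeff f i \<in> subring_gen {t^2, t^3}" using f by (simp add: poly_over_def)
    then show "coeff (D f) i = coeff 0 i" using R_ph1 by (simp add: coeff_D)
  qed
  have dec: "pcompose (D g) (E h) + pcompose (pderiv (E g)) (E h) * D h = 0"
    using D_pcompose[OF g h] Df fgh by simp
  have dH0: "degree (E h) = s" using degree_E[OF lh] s_def by simp
  have dG0: "degree (E g) = d" using degree_E[OF lg] d_def by simp
  have H10: "coeff (D h) 0 = 0" using h0 by (simp add: coeff_D)
  have H1deg: "degree (D h) \<le> s - 1"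
  proof (rule degree_le, intro allI impI)
    fix i assume "s - 1 < i"
    hence "i = s \<or> i > s" by arith
    then show "coeff (D h) i = 0"
    proof
      assume "i = s" then show ?thesis using lh1 s_def by (simp add: coeff_D)
    next
      assume "i > s" then show ?thesis using s_def by (simp add: coeff_D coeff_eq_0)
    qed
  qed
  have Dh0: "D h = 0"
  proof (rule ccontr)
    assume nz: "D h \<noteq> 0"
    define e where "e = degree (D h)"
    have e0: "e \<noteq> 0"
    proof
      assume "e = 0"
      hence "[: coeff (D h) 0 :] = D h" using degree_0_id e_def by metis
      with H10 nz show False by simp
    qed
    have pd: "pderiv (E g) \<noteq> 0" using dG0 dg d_def by (simp add: pderiv_eq_0_iff)
    have dpd: "degree (pderiv (E g)) = d - 1" using dG0 by (simp add: degree_pderiv)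
    have cQ: "pcompose (pderiv (E g)) (E h) \<noteq> 0"
      using pd pcompose_eq_0[of "pderiv (E g)" "E h"] dH0 dh s_def by auto
    have dQ: "degree (pcompose (pderiv (E g)) (E h) * D h) = (d - 1) * s + e"
      using cQ nz by (simp add: degree_mult_eq degree_pcompose dpd dH0 e_def)
    have "pcompose (D g) (E h) = - (pcompose (pderiv (E g)) (E h) * D h)"
      using dec by (simp add: eq_neg_iff_add_eq_0)
    hence "degree (D g) * s = (d - 1) * s + e"
      using dQ by (metis degree_minus degree_pcompose dH0)
    moreover have "e < s" using H1deg e_def dh s_def by simp
    ultimately show False using arith_contra[of "degree (D g)" s d e] e0 dg d_def by simp
  qed
  have hR: "poly_over (subring_gen {t^2, t^3}) h"
    unfolding poly_over_def
  proof
    fix i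
    have "coeff (D h) i = 0" using Dh0 by simp
    hence "ph1 (coeff h i) = 0" by (simp add: coeff_D)
    then show "coeff h i \<in> subring_gen {t^2, t^3}" using ph1_R PZ_coeff[OF h] by blast
  qed
  have "pcompose (D g) (E h) = 0" using dec Dh0 by simp
  hence Dg0: "D g = 0" using pcompose_eq_0[of "D g" "E h"] dH0 dh s_def by simp
  have gR: "poly_over (subring_gen {t^2, t^3}) g"
    unfolding poly_over_def
  proof
    fix i
    have "coeff (D g) i = 0" using Dg0 by simp
    hence "ph1 (coeff g i) = 0" by (simp add: coeff_D)
    then show "coeff g i \<in> subring_gen {t^2, t^3}" using ph1_R PZ_coeff[OF g] by blast
  qed
  show ?thesis using gR hR by simp
qed

lemma dec_R:
  assumes f: "poly_over (subring_gen {t^2, t^3}) f" and lf: "lead_coeff f = 1"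
    and dec: "decomposable_over (range ev) f"
  shows "decomposable_over (subring_gen {t^2, t^3}) f"
proof -
  obtain g h where g: "PZ g" and h: "PZ h" and dg: "degree g \<ge> 2" and dh: "degree h \<ge> 2"
    and fgh: "f = pcompose g h" using dec unfolding decomposable_over_def by blast
  have "lead_coeff g * lead_coeff h ^ degree g = 1"
    using lead_coeff_comp[of h g] dh fgh lf by simp
  obtain a where a: "lead_coeff g = ev a" using PZ_coeff[OF g] by blast
  obtain b where b: "lead_coeff h = ev b" using PZ_coeff[OF h] by blast
  have "ev (a * b ^ degree g) = ev 1" using a b \<open>lead_coeff g * lead_coeff h ^ degree g = 1\<close> by simp
  hence ab: "a * b ^ degree g = 1" by (rule ev_inj)
  hence a0: "a \<noteq> 0" and b0: "b \<noteq> 0" using dg by (auto simp: zero_power)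
  have "degree (a * b ^ degree g) = degree a + degree g * degree b"
    using a0 b0 by (simp add: degree_mult_eq degree_power_eq)
  hence "degree b = 0" using ab dg by simp
  hence cb1: "coeff b 1 = 0" by (simp add: coeff_eq_0)
  have "coeff a 0 * coeff b 0 ^ degree g = 1"
    using arg_cong[OF ab, of "\<lambda>p. coeff p 0"] by (simp add: coeff_mult_0 coeff_0_power)
  hence ca: "coeff a 0 \<noteq> 0" and cb: "coeff b 0 \<noteq> 0" using dg by (auto simp: zero_power)
  define c where "c = coeff h 0"
  have cZ: "c \<in> range ev" using PZ_coeff[OF h] c_def by simp
  define h' where "h' = h + [:- c:]"
  define g' where "g' = pcompose g [:c, 1:]"
  have h': "PZ h'" unfolding h'_def using h cZ by (intro PZ_add PZ_const Z_uminus)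
  have lin: "PZ [:c, 1:]" using cZ Z_1 by (simp add: PZ_pCons PZ_0)
  have g': "PZ g'" unfolding g'_def using g lin by (rule PZ_pcompose)
  have "pcompose [:c, 1:] h' = h" unfolding h'_def by (simp add: pcompose_pCons)
  hence fgh': "f = pcompose g' h'" using fgh unfolding g'_def by (simp add: pcompose_assoc[symmetric])
  have dh': "degree h' = degree h" unfolding h'_def using dh by (intro degree_add_eq_left) simp
  have lh': "lead_coeff h' = lead_coeff h" using dh dh' unfolding h'_def by (simp add: coeff_eq_0)
  have dg': "degree g' = degree g" unfolding g'_def by (simp add: degree_pcompose)
  have lg': "lead_coeff g' = lead_coeff g" unfolding g'_def using lead_coeff_comp[of "[:c,1:]" g] by simp
  have h'0: "coeff h' 0 = 0" unfolding h'_def c_def by simp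
  have "poly_over (subring_gen {t^2, t^3}) g' \<and> poly_over (subring_gen {t^2, t^3}) h'"
    by (rule key[OF g' h' f fgh']) (use dg dh dg' dh' h'0 lg' lh' a b ca cb cb1 in simp_all)
  then show ?thesis unfolding decomposable_over_def using fgh' dg dh dg' dh'
    by (intro exI[of _ g'] exI[of _ h']) simp
qed

end

theorem mainTheorem3:
  fixes t :: "'a::field_char_0"
  assumes "transcendental_over_Q t"
  defines "R \<equiv> subring_gen {t ^ 2, t ^ 3}"
  defines "S \<equiv> integral_closure R (frac_field R)"
  shows "S = subring_gen {t} \<and> S \<noteq> R \<and>
         (\<forall>f. poly_over R f \<and> lead_coeff f = 1 \<and> degree f \<ge> 2 \<and> decomposable_over S f
              \<longrightarrow> decomposable_over R f)"
proof -
  interpret trans t by unfold_locales (rule assms(1))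
  have S: "S = range ev" unfolding S_def R_def by (rule S_eq)
  have tS: "t \<in> S" unfolding S using ev_X by (metis rangeI)
  show ?thesis
  proof (intro conjI allI impI)
    show "S = subring_gen {t}" using S gen_t by simp
    show "S \<noteq> R" using tS t_notin_R R_def by blast
    fix f assume "poly_over R f \<and> lead_coeff f = 1 \<and> 2 \<le> degree f \<and> decomposable_over S f"
    then show "decomposable_over R f" unfolding R_def S using dec_R by blast
  qed
qed

end
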